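(* Let $k$ be an even positive integer. Then $S_3(k;2)=S_{3,2}(k;2)=2k-3$.
   Context: Let $k,r$ be positive integers with $r\mid k$. A solution to $\mathcal{E}$ is a $k$-tuple $(x_1,\dots,x_k)$ of positive integers (not necessarily distinct) with $\sum_{i=1}^{k-1}x_i=x_k$; it lies in $[1,n]$ if all $x_i\in\{1,\dots,n\}$. Given a coloring $\chi$ of $[1,n]$ with colors in $\{0,1,\dots,r-1\}$ (viewed as integers), a solution is $r$-zero-sum if $\sum_{i=1}^k\chi(x_i)\equiv 0\pmod r$. $S_3(k;r)$ denotes the least positive integer $n$ such that every coloring $\chi:[1,n]\to\{0,1,\dots,r-1\}$ admits an $r$-zero-sum solution to $\mathcal{E}$ in $[1,n]$. $S_{3,2}(k;r)$ denotes the least positive integer $n$ such that every coloring $\chi:[1,n]\to\{0,1\}$ admits an $r$-zero-sum solution to $\mathcal{E}$ in $[1,n]$. *)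

theory Defs
  imports Main
begin

text \<open>A k-tuple is represented as a function x :: nat => nat, of which only the
values at indices 1..k matter.\<close>

definition is_solution :: "nat \<Rightarrow> (nat \<Rightarrow> nat) \<Rightarrow> bool" where
  "is_solution k x \<longleftrightarrow> (\<forall>i\<in>{1..k}. 0 < x i) \<and> (\<Sum>i=1..<k. x i) = x k"

definition in_interval :: "nat \<Rightarrow> nat \<Rightarrow> (nat \<Rightarrow> nat) \<Rightarrow> bool" where
  "in_interval n k x \<longleftrightarrow> (\<forall>i\<in>{1..k}. x i \<in> {1..n})"

definition zero_sum :: "nat \<Rightarrow> (nat \<Rightarrow> nat) \<Rightarrow> nat \<Rightarrow> (nat \<Rightarrow> nat) \<Rightarrow> bool" where
  "zero_sum r \<chi> k x \<longleftrightarrow> (\<Sum>i=1..k. \<chi> (x i)) mod r = 0"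

definition good :: "nat \<Rightarrow> nat \<Rightarrow> nat \<Rightarrow> nat \<Rightarrow> bool" where
  "good k r c n \<longleftrightarrow> (\<forall>\<chi>::nat \<Rightarrow> nat. (\<forall>i\<in>{1..n}. \<chi> i < c) \<longrightarrow>
      (\<exists>x. is_solution k x \<and> in_interval n k x \<and> zero_sum r \<chi> k x))"

definition S3 :: "nat \<Rightarrow> nat \<Rightarrow> nat" where
  "S3 k r = (LEAST n. 0 < n \<and> good k r r n)"

definition S32 :: "nat \<Rightarrow> nat \<Rightarrow> nat" where
  "S32 k r = (LEAST n. 0 < n \<and> good k r 2 n)"

end

theory Submission
  imports Defs
begin

lemma split1: "2 \<le> (k::nat) \<Longrightarrow> (\<Sum>i=1..k. f i) = f 1 + (\<Sum>i=2..<k. f i) + (f k::nat)"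
proof -
  assume "2 \<le> k"
  have "{1..k} = insert 1 (insert k {2..<k})" using \<open>2 \<le> k\<close> by auto
  moreover have "k \<notin> {2..<k}" "1 \<notin> insert k {2..<k}" using \<open>2 \<le> k\<close> by auto
  ultimately show ?thesis by (simp add: algebra_simps)
qed

lemma split2: "2 \<le> (k::nat) \<Longrightarrow> (\<Sum>i=1..<k. f i) = f 1 + (\<Sum>i=2..<k. (f i::nat))"
proof -
  assume "2 \<le> k"
  have "{1..<k} = insert 1 {2..<k}" using \<open>2 \<le> k\<close> by auto
  thus ?thesis by simp
qed

lemma split3: "3 \<le> (k::nat) \<Longrightarrow> (\<Sum>i=2..<k. f i) = f 2 + (\<Sum>i=3..<k. (f i::nat))"
proof -
  assume "3 \<le> k"
  have "{2..<k} = insert 2 {3..<k}" using \<open>3 \<le> k\<close> by auto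
  thus ?thesis by simp
qed

lemma solC:
  fixes \<chi> :: "nat \<Rightarrow> nat"
  assumes k: "4 \<le> k" and y: "1 \<le> y" "y \<le> k - 1"
    and H: "\<forall>x. is_solution k x \<and> in_interval (2*k-3) k x \<longrightarrow> \<not> zero_sum 2 \<chi> k x"
  shows "odd (\<chi> y + (k-2) * \<chi> 1 + \<chi> (k-2+y))"
proof -
  define x where "x i = (if i = k then k-2+y else if i = 1 then y else 1)" for i
  have s1: "(\<Sum>i=2..<k. x i) = k - 2"
  proof -
    have "(\<Sum>i=2..<k. x i) = (\<Sum>i=2..<k. 1)" by (rule sum.cong) (auto simp: x_def)
    thus ?thesis by simp
  qed
  have s2: "(\<Sum>i=2..<k. \<chi> (x i)) = (k - 2) * \<chi> 1"
  proof -
    have "(\<Sum>i=2..<k. \<chi> (x i)) = (\<Sum>i=2..<k. \<chi> 1)" by (rule sum.cong) (auto simp: x_def)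
    thus ?thesis by simp
  qed
  have "is_solution k x"
    unfolding is_solution_def using k y split2[of k x] s1 by (auto simp: x_def)
  moreover have "in_interval (2*k-3) k x"
    unfolding in_interval_def using k y by (auto simp: x_def)
  ultimately have "\<not> zero_sum 2 \<chi> k x" using H by blast
  hence od: "odd (\<Sum>i=1..k. \<chi> (x i))" unfolding zero_sum_def by presburger
  have "(\<Sum>i=1..k. \<chi> (x i)) = \<chi> y + (k-2) * \<chi> 1 + \<chi> (k-2+y)"
    using split1[of k "\<lambda>i. \<chi> (x i)"] k s2 y by (simp add: x_def)
  thus ?thesis using od by metis
qed

lemma solB:
  fixes \<chi> :: "nat \<Rightarrow> nat"
  assumes k: "4 \<le> k" and t: "1 \<le> t" "t \<le> k - 2"
    and H: "\<forall>x. is_solution k x \<and> in_interval (2*k-3) k x \<longrightarrow> \<not> zero_sum 2 \<chi> k x"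
  shows "odd (\<chi> 2 + \<chi> t + (k-3) * \<chi> 1 + \<chi> (k-1+t))"
proof -
  define x where "x i = (if i = k then k-1+t else if i = 1 then 2 else if i = 2 then t else 1)" for i
  have s1: "(\<Sum>i=3..<k. x i) = k - 3"
  proof -
    have "(\<Sum>i=3..<k. x i) = (\<Sum>i=3..<k. 1)" by (rule sum.cong) (auto simp: x_def)
    thus ?thesis by simp
  qed
  have s2: "(\<Sum>i=3..<k. \<chi> (x i)) = (k - 3) * \<chi> 1"
  proof -
    have "(\<Sum>i=3..<k. \<chi> (x i)) = (\<Sum>i=3..<k. \<chi> 1)" by (rule sum.cong) (auto simp: x_def)
    thus ?thesis by simp
  qed
  have "is_solution k x"
    unfolding is_solution_def using k t split2[of k x] split3[of k x] s1 by (auto simp: x_def)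
  moreover have "in_interval (2*k-3) k x"
    unfolding in_interval_def using k t by (auto simp: x_def)
  ultimately have "\<not> zero_sum 2 \<chi> k x" using H by blast
  hence od: "odd (\<Sum>i=1..k. \<chi> (x i))" unfolding zero_sum_def by presburger
  have "(\<Sum>i=1..k. \<chi> (x i)) = \<chi> 2 + \<chi> t + (k-3) * \<chi> 1 + \<chi> (k-1+t)"
    using split1[of k "\<lambda>i. \<chi> (x i)"] split3[of k "\<lambda>i. \<chi> (x i)"] k s2 t
    by (simp add: x_def)
  thus ?thesis using od by metis
qed

lemma par_aux: "even ((a::nat)+b+P) \<Longrightarrow> even (c2+a+b+d) \<Longrightarrow> even (d+b+(P+(b+c2)))"
  by presburger

lemma upper:
  fixes \<chi> :: "nat \<Rightarrow> nat"
  assumes k: "4 \<le> k" "even k"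
    and H: "\<forall>x. is_solution k x \<and> in_interval (2*k-3) k x \<longrightarrow> \<not> zero_sum 2 \<chi> k x"
  shows False
proof -
  have e1: "even (k-2)" using k by simp
  have e2: "odd (k-3)" using k by presburger
  have step: "even (\<chi> 2 + \<chi> t + \<chi> 1 + \<chi> (t+1))" if t: "1 \<le> t" "t \<le> k - 2" for t
  proof -
    have b: "odd (\<chi> 2 + \<chi> t + (k-3) * \<chi> 1 + \<chi> (k-1+t))" using solB[OF k(1) t H] .
    have eq: "k-2+(t+1) = k-1+t" using k t by simp
    have c: "odd (\<chi> (t+1) + (k-2) * \<chi> 1 + \<chi> (k-1+t))"
      using solC[OF k(1) _ _ H, of "t+1"] t eq by simp
    show ?thesis using b c e1 e2 by simp
  qed
  have ind: "even (\<chi> t + \<chi> 1 + (t-1) * (\<chi> 1 + \<chi> 2))" if "1 \<le> t" "t \<le> k - 1" for t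
    using that
  proof (induction t rule: nat_induct_at_least)
    case base
    then show ?case by simp
  next
    case (Suc n)
    hence ih: "even (\<chi> n + \<chi> 1 + (n-1) * (\<chi> 1 + \<chi> 2))" by simp
    have st: "even (\<chi> 2 + \<chi> n + \<chi> 1 + \<chi> (n+1))" using step[of n] Suc by simp
    have "(Suc n - 1) * (\<chi> 1 + \<chi> 2) = (n-1) * (\<chi> 1 + \<chi> 2) + (\<chi> 1 + \<chi> 2)"
      using Suc.hyps by (cases n) auto
    then show ?case using par_aux[OF ih st] by simp
  qed
  have a: "even (\<chi> (k-1) + \<chi> 1 + (k-1-1) * (\<chi> 1 + \<chi> 2))" using ind[of "k-1"] k by simp
  have "k - 1 - 1 = k - 2" by simp
  with a e1 k have a2: "even (\<chi> (k-1) + \<chi> 1)" by simp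
  have "k-2+1 = k-1" using k by simp
  moreover have "odd (\<chi> 1 + (k-2) * \<chi> 1 + \<chi> (k-2+1))" using solC[OF k(1) _ _ H, of 1] k by linarith
  ultimately have "odd (\<chi> 1 + (k-2) * \<chi> 1 + \<chi> (k-1))" by metis
  thus False using a2 e1 k by simp
qed

lemma good_upper: "0 < k \<Longrightarrow> even k \<Longrightarrow> good k 2 2 (2*k-3)"
proof -
  assume k0: "0 < k" and ke: "even k"
  show ?thesis
  proof (cases "k = 2")
    case True
    show ?thesis unfolding good_def
    proof (intro allI impI)
      fix \<chi> :: "nat \<Rightarrow> nat"
      let ?x = "\<lambda>_::nat. 1::nat"
      have "is_solution k ?x" using True by (simp add: is_solution_def)
      moreover have "in_interval (2*k-3) k ?x" using True by (simp add: in_interval_def)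
      moreover have "zero_sum 2 \<chi> k ?x" using True by (simp add: zero_sum_def)
      ultimately show "\<exists>x. is_solution k x \<and> in_interval (2*k-3) k x \<and> zero_sum 2 \<chi> k x" by blast
    qed
  next
    case False
    with k0 ke have k4: "4 \<le> k" by presburger
    show ?thesis unfolding good_def
      using upper[OF k4 ke] by blast
  qed
qed

lemma not_good: "4 \<le> k \<Longrightarrow> even k \<Longrightarrow> n \<le> 2*k-4 \<Longrightarrow> \<not> good k 2 2 n"
proof
  assume k: "4 \<le> k" and ke: "even k" and n: "n \<le> 2*k-4" and g: "good k 2 2 n"
  define \<chi> where "\<chi> i = (if i \<le> k-2 then 1 else 0::nat)" for i
  have "\<forall>i\<in>{1..n}. \<chi> i < 2" by (simp add: \<chi>_def)
  with g obtain x where sol: "is_solution k x" and ii: "in_interval n k x" and z: "zero_sum 2 \<chi> k x"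
    unfolding good_def by blast
  have pos: "\<forall>i\<in>{1..k}. 0 < x i" and se: "(\<Sum>i=1..<k. x i) = x k" using sol by (auto simp: is_solution_def)
  have "x k \<in> {1..n}" using ii k unfolding in_interval_def by auto
  hence xk: "x k \<le> 2*k-4" using n by auto
  have lb: "card A \<le> sum x A" if "A \<subseteq> {1..<k}" for A
  proof -
    have "sum (\<lambda>_. 1::nat) A \<le> sum x A"
    proof (rule sum_mono)
      fix j assume "j \<in> A"
      hence "j \<in> {1..k}" using that by auto
      thus "1 \<le> x j" using pos by (simp add: Suc_le_eq)
    qed
    thus ?thesis by simp
  qed
  have small: "x i \<le> k - 2" if i: "i \<in> {1..<k}" for i
  proof -
    have "(\<Sum>j=1..<k. x j) = x i + sum x ({1..<k} - {i})" using i by (simp add: sum.remove)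
    moreover have "card ({1..<k} - {i}) \<le> sum x ({1..<k} - {i})" by (rule lb) auto
    moreover have "card ({1..<k} - {i}) = k - 2" using i by simp
    ultimately show ?thesis using se xk by linarith
  qed
  have big: "k - 1 \<le> x k" using lb[of "{1..<k}"] se by simp
  have "(\<Sum>i=1..k. \<chi> (x i)) = (\<Sum>i=1..<k. \<chi> (x i)) + \<chi> (x k)"
  proof -
    have "{1..k} = insert k {1..<k}" using k by auto
    thus ?thesis by simp
  qed
  also have "(\<Sum>i=1..<k. \<chi> (x i)) = (\<Sum>i=1..<k. 1)"
    by (rule sum.cong) (use small in \<open>auto simp: \<chi>_def\<close>)
  also have "\<chi> (x k) = 0" using big k by (simp add: \<chi>_def)
  finally have "(\<Sum>i=1..k. \<chi> (x i)) = k - 1" by simp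
  moreover have "odd (k - 1)" using ke k by presburger
  ultimately show False using z unfolding zero_sum_def by (metis odd_iff_mod_2_eq_one zero_neq_one)
qed

lemma least_eq: "0 < k \<Longrightarrow> even k \<Longrightarrow> (LEAST n. 0 < n \<and> good k 2 2 n) = 2 * k - 3"
proof -
  assume k0: "0 < k" and ke: "even k"
  show ?thesis
  proof (rule Least_equality)
    show "0 < 2 * k - 3 \<and> good k 2 2 (2 * k - 3)" using good_upper[OF k0 ke] k0 ke by presburger
  next
    fix m assume m: "0 < m \<and> good k 2 2 m"
    show "2 * k - 3 \<le> m"
    proof (rule ccontr)
      assume "\<not> 2 * k - 3 \<le> m"
      hence "m \<le> 2*k-4" "k \<noteq> 2" using m by auto
      hence "4 \<le> k" using k0 ke by presburger
      thus False using not_good[OF _ ke \<open>m \<le> 2*k-4\<close>] m by blast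
    qed
  qed
qed

theorem proposition3:
  fixes k :: nat
  assumes "0 < k" and "even k"
  shows "S3 k 2 = 2 * k - 3 \<and> S32 k 2 = 2 * k - 3"
  using least_eq[OF assms] unfolding S3_def S32_def by simp

end
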